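(* Let $G=(V,E)$ be a finite simple undirected graph with distinct vertex IDs and let $K$ be a positive integer with $\delta(G)\ge K$. Run the procedure Efficient-VM on $G$ with parameter $K$. Then the virtual memory of each active vertex is increased by $K$: for every vertex $v$, in the round in which the color class of $v$ is active, none of the $K$ vertices selected by $v$ is active, and no active vertex other than $v$ selected any of them. Hence during that round the memories of these $K$ vertices are assigned solely to $v$.
   Context: $\Gamma(v)$ is the neighbor set of $v$, $\deg(v)=|\Gamma(v)|$, $\delta(G)=\min_v\deg(v)$. Operation $K$-Next-Modulo$(v,\Gamma(v),K)$: list $\Gamma(v)\cup\{v\}$ in ascending ID order as $u_1,\dots,u_d$ ($d=\deg(v)+1$) with $v=u_i$; $v$ selects $u_{i+1},\dots,u_{i+K}$, indices cyclic modulo $d$. Procedure Efficient-VM$(G,K)$ (synchronous distributed CONGEST model): (1) every vertex $v$ selects its $K$ neighbors by $K$-Next-Modulo (one round); let $G'=(V,E')$ where $E'$ consists of the edges $\{v,u\}$ such that $v$ selected $u$; (2) compute a 2-hop coloring of $G'$, i.e. a coloring in which any two distinct vertices at distance at most $2$ in $G'$ get different colors (by running Linial's coloring algorithm on $G'^2$); (3) process the color classes one per round in round-robin order; in the round of a color class, exactly the vertices of that class are active, and each active vertex $v$ distributes its backup data to the $K$ vertices it selected, using their memories. *)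

theory Defs
  imports Main
begin

text \<open>Vertices are their own (distinct) IDs, drawn from a linearly ordered type.
A finite simple undirected graph is a finite vertex set V with a set E of
2-element subsets of V.\<close>

definition simple_graph :: "'a set \<Rightarrow> 'a set set \<Rightarrow> bool" where
  "simple_graph V E \<longleftrightarrow> finite V \<and>
     (\<forall>e\<in>E. \<exists>u w. e = {u, w} \<and> u \<noteq> w \<and> u \<in> V \<and> w \<in> V)"

definition nbrs :: "'a set set \<Rightarrow> 'a \<Rightarrow> 'a set" where
  "nbrs E v = {u. {v, u} \<in> E}"

definition min_degree_ge :: "'a set \<Rightarrow> 'a set set \<Rightarrow> nat \<Rightarrow> bool" where
  "min_degree_ge V E K \<longleftrightarrow> (\<forall>v\<in>V. card (nbrs E v) \<ge> K)"

definition k_next_modulo :: "'a::linorder set set \<Rightarrow> nat \<Rightarrow> 'a \<Rightarrow> 'a set" where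
  "k_next_modulo E K v =
     (let L = sorted_list_of_set (insert v (nbrs E v));
          d = length L;
          i = (THE i. i < d \<and> L ! i = v)
      in (\<lambda>j. L ! ((i + j) mod d)) ` {1..K})"

definition selected_edges :: "'a::linorder set \<Rightarrow> 'a set set \<Rightarrow> nat \<Rightarrow> 'a set set" where
  "selected_edges V E K = {{v, u} | v u. v \<in> V \<and> u \<in> k_next_modulo E K v}"

definition two_hop_coloring :: "'a set \<Rightarrow> 'a set set \<Rightarrow> ('a \<Rightarrow> nat) \<Rightarrow> bool" where
  "two_hop_coloring V E' c \<longleftrightarrow>
     (\<forall>u\<in>V. \<forall>w\<in>V. u \<noteq> w \<and> ({u, w} \<in> E' \<or> (\<exists>x. {u, x} \<in> E' \<and> {x, w} \<in> E'))
        \<longrightarrow> c u \<noteq> c w)"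

end

theory Submission
  imports Defs
begin

lemma mod_cancel_aux:
  fixes i j j' d :: nat
  assumes "(i + j) mod d = (i + j') mod d" "j < d" "j' < d"
  shows "j = j'"
proof -
  have "int ((i + j) mod d) = int ((i + j') mod d)" using assms(1) by simp
  hence "(int i + int j) mod int d = (int i + int j') mod int d" by (simp add: of_nat_mod)
  hence "int d dvd ((int i + int j) - (int i + int j'))" by (simp only: mod_eq_dvd_iff)
  hence "int d dvd (int j - int j')" by simp
  hence "int j mod int d = int j' mod int d" by (simp only: mod_eq_dvd_iff)
  thus ?thesis using assms(2,3) by simp
qed

lemma knm_props:
  fixes E :: "'a::linorder set set"
  assumes fin: "finite (nbrs E v)" and nv: "v \<notin> nbrs E v" and deg: "card (nbrs E v) \<ge> K"
  shows "card (k_next_modulo E K v) = K \<and> v \<notin> k_next_modulo E K v \<and>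
         k_next_modulo E K v \<subseteq> nbrs E v"
proof -
  define S where "S = insert v (nbrs E v)"
  define L where "L = sorted_list_of_set S"
  define d where "d = length L"
  have finS: "finite S" using fin S_def by simp
  have dist: "distinct L" and setL: "set L = S" using finS L_def by auto
  have dS: "d = card S" using dist setL d_def distinct_card by fastforce
  have dgt: "d > K" using dS S_def fin nv deg by simp
  have "v \<in> set L" using setL S_def by simp
  then obtain i where i: "i < d" "L ! i = v" by (metis in_set_conv_nth d_def)
  have ithe: "(THE i. i < d \<and> L ! i = v) = i"
  proof (rule the_equality)
    show "i < d \<and> L ! i = v" using i by simp
  next
    fix i' assume "i' < d \<and> L ! i' = v"
    thus "i' = i" using i dist d_def nth_eq_iff_index_eq[of L i' i] by auto
  qed
  define f where "f = (\<lambda>j. L ! ((i + j) mod d))"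
  have kdef: "k_next_modulo E K v = f ` {1..K}"
  proof -
    have ithe': "(THE i. i < length (sorted_list_of_set (insert v (nbrs E v))) \<and>
        sorted_list_of_set (insert v (nbrs E v)) ! i = v) = i"
      using ithe unfolding d_def L_def S_def .
    show ?thesis unfolding k_next_modulo_def Let_def ithe' f_def d_def L_def S_def ..
  qed
  have dpos: "d > 0" using dgt by simp
  have modinj: "j = j'" if "j \<in> {1..K}" "j' \<in> {1..K}" "(i + j) mod d = (i + j') mod d" for j j'
    using mod_cancel_aux[OF that(3)] that(1,2) dgt by auto
  have inj: "inj_on f {1..K}"
  proof (rule inj_onI)
    fix j j' assume a: "j \<in> {1..K}" "j' \<in> {1..K}" "f j = f j'"
    have "(i + j) mod d < length L" "(i + j') mod d < length L" using dpos d_def by auto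
    hence "(i + j) mod d = (i + j') mod d" using a(3) dist f_def nth_eq_iff_index_eq[of L] by auto
    thus "j = j'" using modinj a by blast
  qed
  have notv: "f j \<noteq> v" if "j \<in> {1..K}" for j
  proof
    assume "f j = v"
    have "(i + j) mod d < length L" "i < length L" using dpos d_def i by auto
    hence "(i + j) mod d = i" using \<open>f j = v\<close> i dist f_def nth_eq_iff_index_eq[of L] by auto
    hence "(i + j) mod d = (i + 0) mod d" using i by simp
    hence "j = 0" using mod_cancel_aux[of i j d 0] that dgt by auto
    thus False using that by simp
  qed
  have inS: "f j \<in> S" for j using dpos d_def setL f_def by auto
  have c1: "card (f ` {1..K}) = K" using card_image[OF inj] by simp
  have c2: "v \<notin> f ` {1..K}" using notv by blast
  have c3: "f ` {1..K} \<subseteq> nbrs E v" using inS notv S_def by blast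
  show ?thesis using c1 c2 c3 kdef by simp
qed

theorem lemma1:
  fixes V :: "'a::linorder set" and E :: "'a set set" and K :: nat and c :: "'a \<Rightarrow> nat"
  assumes "simple_graph V E"
    and "K > 0"
    and "min_degree_ge V E K"
    and "two_hop_coloring V (selected_edges V E K) c"
  shows "\<forall>v\<in>V. card (k_next_modulo E K v) = K \<and> v \<notin> k_next_modulo E K v \<and>
           (\<forall>u\<in>k_next_modulo E K v. c u \<noteq> c v \<and>
              (\<forall>w\<in>V. w \<noteq> v \<and> c w = c v \<longrightarrow> u \<notin> k_next_modulo E K w))"
proof
  fix v assume v: "v \<in> V"
  have nsub: "nbrs E x \<subseteq> V" for x
  proof
    fix u assume "u \<in> nbrs E x"
    hence "{x, u} \<in> E" by (simp add: nbrs_def)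
    then obtain a b where "{x, u} = {a, b}" "a \<in> V" "b \<in> V"
      using assms(1) unfolding simple_graph_def by blast
    thus "u \<in> V" by (auto simp: doubleton_eq_iff)
  qed
  have nv: "x \<notin> nbrs E x" for x
  proof
    assume "x \<in> nbrs E x"
    hence "{x} \<in> E" by (simp add: nbrs_def)
    then obtain a b where "{x} = {a, b}" "a \<noteq> b"
      using assms(1) unfolding simple_graph_def by blast
    thus False by (auto simp: doubleton_eq_iff)
  qed
  have finV: "finite V" using assms(1) simple_graph_def by blast
  have P: "card (k_next_modulo E K x) = K \<and> x \<notin> k_next_modulo E K x \<and>
         k_next_modulo E K x \<subseteq> nbrs E x" if "x \<in> V" for x
  proof -
    have "finite (nbrs E x)" using nsub finV finite_subset by blast
    moreover have "card (nbrs E x) \<ge> K" using that assms(3) unfolding min_degree_ge_def by blast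
    ultimately show ?thesis using knm_props[of E x K] nv by blast
  qed
  show "card (k_next_modulo E K v) = K \<and> v \<notin> k_next_modulo E K v \<and>
           (\<forall>u\<in>k_next_modulo E K v. c u \<noteq> c v \<and>
              (\<forall>w\<in>V. w \<noteq> v \<and> c w = c v \<longrightarrow> u \<notin> k_next_modulo E K w))"
  proof (intro conjI ballI allI impI)
    show "card (k_next_modulo E K v) = K" "v \<notin> k_next_modulo E K v" using P v by auto
  next
    fix u assume u: "u \<in> k_next_modulo E K v"
    have uV: "u \<in> V" and uv: "u \<noteq> v" using P[OF v] u nsub by auto
    have H: "\<And>a b. a \<in> V \<Longrightarrow> b \<in> V \<Longrightarrow> a \<noteq> b \<Longrightarrow>
        {a, b} \<in> selected_edges V E K \<or> (\<exists>x. {a, x} \<in> selected_edges V E K \<and> {x, b} \<in> selected_edges V E K)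
        \<Longrightarrow> c a \<noteq> c b"
      using assms(4) unfolding two_hop_coloring_def by blast
    have e1: "{v, u} \<in> selected_edges V E K" using v u unfolding selected_edges_def by blast
    have "c v \<noteq> c u" using H[OF v uV _ disjI1[OF e1]] uv by blast
    thus "c u \<noteq> c v" by simp
    {
      fix w assume w: "w \<in> V" "w \<noteq> v \<and> c w = c v" "u \<in> k_next_modulo E K w"
      have e2': "{w, u} \<in> selected_edges V E K" using w unfolding selected_edges_def by blast
      have "{u, w} = {w, u}" by (simp add: insert_commute)
      hence e2: "{u, w} \<in> selected_edges V E K" using e2' by simp
      have ex: "\<exists>x. {v, x} \<in> selected_edges V E K \<and> {x, w} \<in> selected_edges V E K"
        using e1 e2 by blast
      have "c v \<noteq> c w" using H[OF v w(1) _ disjI2[OF ex]] w(2) by blast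
      with w have False by simp
    }
    thus "\<And>w. w \<in> V \<Longrightarrow> w \<noteq> v \<and> c w = c v \<Longrightarrow> u \<notin> k_next_modulo E K w" by blast
  qed
qed

end
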